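(* Let $\mathcal F=\{D_4,P\}$, where $D_4\in\{0,1\}^{4\times4}$ has support $\{(1,1),(2,2),(3,3),(4,4)\}$ and $P\in\{0,1\}^{4\times3}$ has support $\{(1,2),(2,1),(3,2),(4,3)\}$. Then the class $\mathrm{Av}(\mathcal F)$ is row-bounded but not column-bounded.
   Context: All matrices are binary; rows numbered top to bottom, columns left to right; $(i,j)$ is the entry in row $i$, column $j$; $(a,b]=\{a+1,\dots,b\}$. A pattern $P\in\{0,1\}^{k\times\ell}$ is an interval minor of $M\in\{0,1\}^{m\times n}$ if there are integers $0=r_0<\dots<r_k=m$ and $0=c_0<\dots<c_\ell=n$ such that for each 1-entry $(i,j)$ of $P$ the submatrix of $M$ on rows $(r_{i-1},r_i]$ and columns $(c_{j-1},c_j]$ contains a 1-entry; otherwise $M$ avoids $P$. For a set $\mathcal F$ of patterns, $\mathrm{Av}(\mathcal F)$ is the set of binary matrices avoiding every pattern in $\mathcal F$. $M\in\mathcal C$ is critical for $\mathcal C$ if changing any single 0-entry of $M$ into a 1-entry yields a matrix not in $\mathcal C$. A 0-run is a maximal set of consecutive 0-entries within a single row or a single column; the complexity of a line is the number of 0-runs in it. $\mathcal C$ is row-bounded (column-bounded) if the supremum over all matrices critical for $\mathcal C$ of the maximum complexity of a row (column) is finite. *)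

theory Defs
  imports Main
begin

text \<open>A binary matrix: (number of rows m, number of columns n, entries).
  Entry (i,j) with 1 <= i <= m, 1 <= j <= n is a 1-entry iff the entry function gives True.
  Values outside that range are irrelevant.\<close>
type_synonym bmat = "nat \<times> nat \<times> (nat \<Rightarrow> nat \<Rightarrow> bool)"

definition nrows :: "bmat \<Rightarrow> nat" where "nrows M = fst M"
definition ncols :: "bmat \<Rightarrow> nat" where "ncols M = fst (snd M)"
definition ent :: "bmat \<Rightarrow> nat \<Rightarrow> nat \<Rightarrow> bool" where "ent M = snd (snd M)"

definition interval_minor :: "bmat \<Rightarrow> bmat \<Rightarrow> bool" where
  "interval_minor P M \<longleftrightarrow>
     (\<exists>r c :: nat \<Rightarrow> nat.
        r 0 = 0 \<and> r (nrows P) = nrows M \<and> (\<forall>i < nrows P. r i < r (Suc i)) \<and>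
        c 0 = 0 \<and> c (ncols P) = ncols M \<and> (\<forall>j < ncols P. c j < c (Suc j)) \<and>
        (\<forall>i \<in> {1..nrows P}. \<forall>j \<in> {1..ncols P}. ent P i j \<longrightarrow>
           (\<exists>a \<in> {r (i - 1)<..r i}. \<exists>b \<in> {c (j - 1)<..c j}. ent M a b)))"

definition Av :: "bmat set \<Rightarrow> bmat set" where
  "Av F = {M. \<forall>P \<in> F. \<not> interval_minor P M}"

definition set_one :: "bmat \<Rightarrow> nat \<Rightarrow> nat \<Rightarrow> bmat" where
  "set_one M i j = (nrows M, ncols M, (ent M)(i := (ent M i)(j := True)))"

definition critical :: "bmat set \<Rightarrow> bmat \<Rightarrow> bool" where
  "critical C M \<longleftrightarrow> M \<in> C \<and>
     (\<forall>i \<in> {1..nrows M}. \<forall>j \<in> {1..ncols M}. \<not> ent M i j \<longrightarrow> set_one M i j \<notin> C)"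

definition row_zero_runs :: "bmat \<Rightarrow> nat \<Rightarrow> nat set set" where
  "row_zero_runs M i = {{a..b} | a b. 1 \<le> a \<and> a \<le> b \<and> b \<le> ncols M \<and>
      (\<forall>j \<in> {a..b}. \<not> ent M i j) \<and>
      (a = 1 \<or> ent M i (a - 1)) \<and> (b = ncols M \<or> ent M i (b + 1))}"

definition col_zero_runs :: "bmat \<Rightarrow> nat \<Rightarrow> nat set set" where
  "col_zero_runs M j = {{a..b} | a b. 1 \<le> a \<and> a \<le> b \<and> b \<le> nrows M \<and>
      (\<forall>i \<in> {a..b}. \<not> ent M i j) \<and>
      (a = 1 \<or> ent M (a - 1) j) \<and> (b = nrows M \<or> ent M (b + 1) j)}"

definition row_complexity :: "bmat \<Rightarrow> nat \<Rightarrow> nat" where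
  "row_complexity M i = card (row_zero_runs M i)"

definition col_complexity :: "bmat \<Rightarrow> nat \<Rightarrow> nat" where
  "col_complexity M j = card (col_zero_runs M j)"

definition row_bounded :: "bmat set \<Rightarrow> bool" where
  "row_bounded C \<longleftrightarrow> (\<exists>B::nat. \<forall>M. critical C M \<longrightarrow>
      (\<forall>i \<in> {1..nrows M}. row_complexity M i \<le> B))"

definition col_bounded :: "bmat set \<Rightarrow> bool" where
  "col_bounded C \<longleftrightarrow> (\<exists>B::nat. \<forall>M. critical C M \<longrightarrow>
      (\<forall>j \<in> {1..ncols M}. col_complexity M j \<le> B))"

definition D4 :: bmat where
  "D4 = (4, 4, \<lambda>i j. (i, j) \<in> {(1,1), (2,2), (3,3), (4,4)})"

definition Ppat :: bmat where
  "Ppat = (4, 3, \<lambda>i j. (i, j) \<in> {(1,2), (2,1), (3,2), (4,3)})"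

end

theory Submission
  imports Defs
begin


lemma D4_simps: "nrows D4 = 4" "ncols D4 = 4"
  "ent D4 i j \<longleftrightarrow> (i = 1 \<and> j = 1) \<or> (i = 2 \<and> j = 2) \<or> (i = 3 \<and> j = 3) \<or> (i = 4 \<and> j = 4)"
  by (auto simp: D4_def nrows_def ncols_def ent_def)

lemma P_simps: "nrows Ppat = 4" "ncols Ppat = 3"
  "ent Ppat i j \<longleftrightarrow> (i = 1 \<and> j = 2) \<or> (i = 2 \<and> j = 1) \<or> (i = 3 \<and> j = 2) \<or> (i = 4 \<and> j = 3)"
  by (auto simp: Ppat_def nrows_def ncols_def ent_def)

definition chainD :: "bmat \<Rightarrow> bool" where
  "chainD M \<longleftrightarrow> (\<exists>a1 b1 a2 b2 a3 b3 a4 b4. 1 \<le> a1 \<and> a1 < a2 \<and> a2 < a3 \<and> a3 < a4 \<and> a4 \<le> nrows M \<and>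
     1 \<le> b1 \<and> b1 < b2 \<and> b2 < b3 \<and> b3 < b4 \<and> b4 \<le> ncols M \<and>
     ent M a1 b1 \<and> ent M a2 b2 \<and> ent M a3 b3 \<and> ent M a4 b4)"

definition chainP :: "bmat \<Rightarrow> bool" where
  "chainP M \<longleftrightarrow> (\<exists>a1 b1 a2 b2 a3 b3 a4 b4. 1 \<le> a1 \<and> a1 < a2 \<and> a2 < a3 \<and> a3 < a4 \<and> a4 \<le> nrows M \<and>
     1 \<le> b2 \<and> b2 < b1 \<and> b2 < b3 \<and> b1 < b4 \<and> b3 < b4 \<and> b4 \<le> ncols M \<and>
     ent M a1 b1 \<and> ent M a2 b2 \<and> ent M a3 b3 \<and> ent M a4 b4)"

lemma chainD_I:
  assumes "1 \<le> a1" "a1 < a2" "a2 < a3" "a3 < a4" "a4 \<le> nrows M"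
     "1 \<le> b1" "b1 < b2" "b2 < b3" "b3 < b4" "b4 \<le> ncols M"
     "ent M a1 b1" "ent M a2 b2" "ent M a3 b3" "ent M a4 b4"
  shows "chainD M"
  unfolding chainD_def using assms by blast

lemma chainP_I:
  assumes "1 \<le> a1" "a1 < a2" "a2 < a3" "a3 < a4" "a4 \<le> nrows M"
     "1 \<le> b2" "b2 < b1" "b2 < b3" "b1 < b4" "b3 < b4" "b4 \<le> ncols M"
     "ent M a1 b1" "ent M a2 b2" "ent M a3 b3" "ent M a4 b4"
  shows "chainP M"
  unfolding chainP_def using assms by blast

lemma less4: "(i::nat) < 4 \<longleftrightarrow> i = 0 \<or> i = 1 \<or> i = 2 \<or> i = 3" by arith
lemma less3: "(i::nat) < 3 \<longleftrightarrow> i = 0 \<or> i = 1 \<or> i = 2" by arith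

lemma minorD_imp: assumes "interval_minor D4 M" shows "chainD M"
proof -
  obtain r c where r0: "r 0 = 0" and r4: "r 4 = nrows M" and rs: "\<forall>i<4. r i < r (Suc i)"
    and c0: "c 0 = 0" and c4: "c 4 = ncols M" and cs: "\<forall>j<4. c j < c (Suc j)"
    and H: "\<forall>i\<in>{1..4}. \<forall>j\<in>{1..4}. ent D4 i j \<longrightarrow> (\<exists>a\<in>{r (i - 1)<..r i}. \<exists>b\<in>{c (j - 1)<..c j}. ent M a b)"
    using assms unfolding interval_minor_def D4_simps by blast
  have r: "r 0 < r 1" "r 1 < r 2" "r 2 < r 3" "r 3 < r 4" using rs
    by (auto simp: numeral_eq_Suc)
  have c: "c 0 < c 1" "c 1 < c 2" "c 2 < c 3" "c 3 < c 4" using cs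
    by (auto simp: numeral_eq_Suc)
  have "\<exists>a\<in>{r 0<..r 1}. \<exists>b\<in>{c 0<..c 1}. ent M a b" using H[rule_format, of 1 1] by (simp add: D4_simps)
  then obtain a1 b1 where 1: "a1\<in>{r 0<..r 1}" "b1\<in>{c 0<..c 1}" "ent M a1 b1" by blast
  have "\<exists>a\<in>{r 1<..r 2}. \<exists>b\<in>{c 1<..c 2}. ent M a b" using H[rule_format, of 2 2] by (simp add: D4_simps)
  then obtain a2 b2 where 2: "a2\<in>{r 1<..r 2}" "b2\<in>{c 1<..c 2}" "ent M a2 b2" by blast
  have "\<exists>a\<in>{r 2<..r 3}. \<exists>b\<in>{c 2<..c 3}. ent M a b" using H[rule_format, of 3 3] by (simp add: D4_simps)
  then obtain a3 b3 where 3: "a3\<in>{r 2<..r 3}" "b3\<in>{c 2<..c 3}" "ent M a3 b3" by blast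
  have "\<exists>a\<in>{r 3<..r 4}. \<exists>b\<in>{c 3<..c 4}. ent M a b" using H[rule_format, of 4 4] by (simp add: D4_simps)
  then obtain a4 b4 where 4: "a4\<in>{r 3<..r 4}" "b4\<in>{c 3<..c 4}" "ent M a4 b4" by blast
  show ?thesis apply (rule chainD_I[of a1 a2 a3 a4 M b1 b2 b3 b4])
    using 1 2 3 4 r0 c0 r4 c4 by auto
qed

lemma minorP_imp: assumes "interval_minor Ppat M" shows "chainP M"
proof -
  obtain r c where r0: "r 0 = 0" and r4: "r 4 = nrows M" and rs: "\<forall>i<4. r i < r (Suc i)"
    and c0: "c 0 = 0" and c4: "c 3 = ncols M" and cs: "\<forall>j<3. c j < c (Suc j)"
    and H: "\<forall>i\<in>{1..4}. \<forall>j\<in>{1..3}. ent Ppat i j \<longrightarrow> (\<exists>a\<in>{r (i - 1)<..r i}. \<exists>b\<in>{c (j - 1)<..c j}. ent M a b)"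
    using assms unfolding interval_minor_def P_simps by blast
  have r: "r 0 < r 1" "r 1 < r 2" "r 2 < r 3" "r 3 < r 4" using rs
    by (auto simp: numeral_eq_Suc)
  have c: "c 0 < c 1" "c 1 < c 2" "c 2 < c 3" using cs
    by (auto simp: numeral_eq_Suc)
  have "\<exists>a\<in>{r 0<..r 1}. \<exists>b\<in>{c 1<..c 2}. ent M a b" using H[rule_format, of 1 2] by (simp add: P_simps)
  then obtain a1 b1 where 1: "a1\<in>{r 0<..r 1}" "b1\<in>{c 1<..c 2}" "ent M a1 b1" by blast
  have "\<exists>a\<in>{r 1<..r 2}. \<exists>b\<in>{c 0<..c 1}. ent M a b" using H[rule_format, of 2 1] by (simp add: P_simps)
  then obtain a2 b2 where 2: "a2\<in>{r 1<..r 2}" "b2\<in>{c 0<..c 1}" "ent M a2 b2" by blast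
  have "\<exists>a\<in>{r 2<..r 3}. \<exists>b\<in>{c 1<..c 2}. ent M a b" using H[rule_format, of 3 2] by (simp add: P_simps)
  then obtain a3 b3 where 3: "a3\<in>{r 2<..r 3}" "b3\<in>{c 1<..c 2}" "ent M a3 b3" by blast
  have "\<exists>a\<in>{r 3<..r 4}. \<exists>b\<in>{c 2<..c 3}. ent M a b" using H[rule_format, of 4 3] by (simp add: P_simps)
  then obtain a4 b4 where 4: "a4\<in>{r 3<..r 4}" "b4\<in>{c 2<..c 3}" "ent M a4 b4" by blast
  show ?thesis apply (rule chainP_I[of a1 a2 a3 a4 M b2 b1 b3 b4])
    using 1 2 3 4 r0 c0 r4 c4 by auto
qed

lemma helper_ex: "a \<in> {lo<..hi} \<Longrightarrow> b \<in> {lo'<..hi'} \<Longrightarrow> ent M a b \<Longrightarrow> \<exists>a\<in>{lo<..hi}. \<exists>b\<in>{lo'<..hi'}. ent M a b"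
  by blast

lemma chainD_imp: assumes "chainD M" shows "interval_minor D4 M"
proof -
  obtain a1 b1 a2 b2 a3 b3 a4 b4 where h: "1 \<le> a1" "a1 < a2" "a2 < a3" "a3 < a4" "a4 \<le> nrows M"
     "1 \<le> b1" "b1 < b2" "b2 < b3" "b3 < b4" "b4 \<le> ncols M"
     "ent M a1 b1" "ent M a2 b2" "ent M a3 b3" "ent M a4 b4"
    using assms unfolding chainD_def by blast
  define r where "r = (\<lambda>k. [0, a1, a2, a3, nrows M] ! k)"
  define c where "c = (\<lambda>k. [0, b1, b2, b3, ncols M] ! k)"
  have rs: "\<forall>i<4. r i < r (Suc i)" using h by (auto simp: r_def c_def less_Suc_eq numeral_eq_Suc)
  have cs: "\<forall>i<4. c i < c (Suc i)" using h by (auto simp: r_def c_def less_Suc_eq numeral_eq_Suc)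
  have H: "\<forall>i\<in>{1..4}. \<forall>j\<in>{1..4}. ent D4 i j \<longrightarrow> (\<exists>a\<in>{r (i - 1)<..r i}. \<exists>b\<in>{c (j - 1)<..c j}. ent M a b)"
  proof (intro ballI impI)
    fix i j assume "i \<in> {1..4::nat}" "j \<in> {1..4::nat}" "ent D4 i j"
    then have "(i = 1 \<and> j = 1) \<or> (i = 2 \<and> j = 2) \<or> (i = 3 \<and> j = 3) \<or> (i = 4 \<and> j = 4)" by (simp add: D4_simps)
    then show "\<exists>a\<in>{r (i - 1)<..r i}. \<exists>b\<in>{c (j - 1)<..c j}. ent M a b"
    proof (elim disjE conjE)
      assume "i = 1" "j = 1" then show ?thesis using h by (intro helper_ex[of a1 _ _ b1]) (simp_all add: r_def c_def numeral_eq_Suc)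
    next
      assume "i = 2" "j = 2" then show ?thesis using h by (intro helper_ex[of a2 _ _ b2]) (simp_all add: r_def c_def numeral_eq_Suc)
    next
      assume "i = 3" "j = 3" then show ?thesis using h by (intro helper_ex[of a3 _ _ b3]) (simp_all add: r_def c_def numeral_eq_Suc)
    next
      assume "i = 4" "j = 4" then show ?thesis using h by (intro helper_ex[of a4 _ _ b4]) (simp_all add: r_def c_def numeral_eq_Suc)
    qed
  qed
  have ends: "r 0 = 0" "r 4 = nrows M" "c 0 = 0" "c 4 = ncols M" by (simp_all add: r_def c_def numeral_eq_Suc)
  show ?thesis unfolding interval_minor_def D4_simps(1,2)
    apply (rule exI[of _ r], rule exI[of _ c])
    using rs cs H ends by blast
qed

lemma chainP_imp: assumes "chainP M" shows "interval_minor Ppat M"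
proof -
  obtain a1 b1 a2 b2 a3 b3 a4 b4 where h: "1 \<le> a1" "a1 < a2" "a2 < a3" "a3 < a4" "a4 \<le> nrows M"
     "1 \<le> b2" "b2 < b1" "b2 < b3" "b1 < b4" "b3 < b4" "b4 \<le> ncols M"
     "ent M a1 b1" "ent M a2 b2" "ent M a3 b3" "ent M a4 b4"
    using assms unfolding chainP_def by blast
  define r where "r = (\<lambda>k. [0, a1, a2, a3, nrows M] ! k)"
  define c where "c = (\<lambda>k. [0, b2, max b1 b3, ncols M] ! k)"
  have rs: "\<forall>i<4. r i < r (Suc i)" using h by (auto simp: r_def c_def less_Suc_eq numeral_eq_Suc)
  have cs: "\<forall>i<3. c i < c (Suc i)" using h by (auto simp: r_def c_def less_Suc_eq numeral_eq_Suc)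
  have H: "\<forall>i\<in>{1..4}. \<forall>j\<in>{1..3}. ent Ppat i j \<longrightarrow> (\<exists>a\<in>{r (i - 1)<..r i}. \<exists>b\<in>{c (j - 1)<..c j}. ent M a b)"
  proof (intro ballI impI)
    fix i j assume "i \<in> {1..4::nat}" "j \<in> {1..3::nat}" "ent Ppat i j"
    then have "(i = 1 \<and> j = 2) \<or> (i = 2 \<and> j = 1) \<or> (i = 3 \<and> j = 2) \<or> (i = 4 \<and> j = 3)" by (simp add: P_simps)
    then show "\<exists>a\<in>{r (i - 1)<..r i}. \<exists>b\<in>{c (j - 1)<..c j}. ent M a b"
    proof (elim disjE conjE)
      assume "i = 1" "j = 2" then show ?thesis using h by (intro helper_ex[of a1 _ _ b1]) (simp_all add: r_def c_def numeral_eq_Suc)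
    next
      assume "i = 2" "j = 1" then show ?thesis using h by (intro helper_ex[of a2 _ _ b2]) (simp_all add: r_def c_def numeral_eq_Suc)
    next
      assume "i = 3" "j = 2" then show ?thesis using h by (intro helper_ex[of a3 _ _ b3]) (simp_all add: r_def c_def numeral_eq_Suc)
    next
      assume "i = 4" "j = 3" then show ?thesis using h by (intro helper_ex[of a4 _ _ b4]) (simp_all add: r_def c_def numeral_eq_Suc)
    qed
  qed
  have ends: "r 0 = 0" "r 4 = nrows M" "c 0 = 0" "c 3 = ncols M" by (simp_all add: r_def c_def numeral_eq_Suc)
  show ?thesis unfolding interval_minor_def P_simps(1,2)
    apply (rule exI[of _ r], rule exI[of _ c])
    using rs cs H ends by blast
qed

lemma minorD_iff: "interval_minor D4 M \<longleftrightarrow> chainD M" using minorD_imp chainD_imp by blast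
lemma minorP_iff: "interval_minor Ppat M \<longleftrightarrow> chainP M" using minorP_imp chainP_imp by blast

lemma Av_iff: "M \<in> Av {D4, Ppat} \<longleftrightarrow> \<not> chainD M \<and> \<not> chainP M"
  by (simp add: Av_def minorD_iff minorP_iff)



definition Mt :: "nat \<Rightarrow> bmat" where
  "Mt t = (2*t+2, 2*t+3, \<lambda>a b. (odd a \<and> a \<le> 2*t+1 \<and> (b = 1 \<or> a + b = 2*t+3)) \<or>
                               (even a \<and> 4 \<le> a \<and> a \<le> 2*t+2 \<and> a + b = 2*t+7))"

lemma Mt_simps: "nrows (Mt t) = 2*t+2" "ncols (Mt t) = 2*t+3"
  "ent (Mt t) a b \<longleftrightarrow> (odd a \<and> a \<le> 2*t+1 \<and> (b = 1 \<or> a + b = 2*t+3)) \<or>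
                               (even a \<and> 4 \<le> a \<and> a \<le> 2*t+2 \<and> a + b = 2*t+7)"
  by (simp_all add: Mt_def nrows_def ncols_def ent_def)

lemma Mt_L1: "ent (Mt t) a b \<Longrightarrow> even a \<Longrightarrow> ent (Mt t) a' b' \<Longrightarrow> a < a' \<Longrightarrow> b < b' \<Longrightarrow> False"
  unfolding Mt_simps by presburger

lemma Mt_L2: "ent (Mt t) a b \<Longrightarrow> 1 < b \<Longrightarrow> ent (Mt t) a' b' \<Longrightarrow> a < a' \<Longrightarrow> b < b' \<Longrightarrow> even a'"
  unfolding Mt_simps by presburger

lemma Mt_noD: "\<not> chainD (Mt t)"
proof
  assume "chainD (Mt t)"
  then obtain a1 b1 a2 b2 a3 b3 a4 b4 where h: "1 \<le> a1" "a1 < a2" "a2 < a3" "a3 < a4" 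
     "1 \<le> b1" "b1 < b2" "b2 < b3" "b3 < b4" 
     "ent (Mt t) a1 b1" "ent (Mt t) a2 b2" "ent (Mt t) a3 b3" "ent (Mt t) a4 b4"
    unfolding chainD_def by blast
  have "even a3" using Mt_L2[OF h(10) _ h(11)] h by linarith
  then show False using Mt_L1[OF h(11) _ h(12)] h by linarith
qed

lemma Mt_noP: "\<not> chainP (Mt t)"
proof
  assume "chainP (Mt t)"
  then obtain a1 b1 a2 b2 a3 b3 a4 b4 where h: "1 \<le> a1" "a1 < a2" "a2 < a3" "a3 < a4" 
     "1 \<le> b2" "b2 < b1" "b2 < b3" "b1 < b4" "b3 < b4" 
     "ent (Mt t) a1 b1" "ent (Mt t) a2 b2" "ent (Mt t) a3 b3" "ent (Mt t) a4 b4"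
    unfolding chainP_def by blast
  have e4: "even a4" using Mt_L2[OF h(12) _ h(13)] h by linarith
  have o3: "odd a3" using Mt_L1[OF h(12) _ h(13)] h by blast
  have s3: "a3 + b3 = 2*t+3" using h(12) o3 h by (simp add: Mt_simps)
  have s4: "a4 + b4 = 2*t+7" using h(13) e4 by (simp add: Mt_simps)
  have c1: "(odd a1 \<and> a1 + b1 = 2*t+3) \<or> (even a1 \<and> a1 + b1 = 2*t+7)" using h(10) h by (auto simp: Mt_simps)
  have c2: "(odd a2 \<and> (b2 = 1 \<or> a2 + b2 = 2*t+3)) \<or> (even a2 \<and> a2 + b2 = 2*t+7)" using h(11) by (auto simp: Mt_simps)
  have l4: "a4 < a3 + 4" using s3 s4 h(9) by linarith
  show False
  proof (cases "even a1")
    case True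
    then have "a1 + b1 = 2*t+7" using c1 by auto
    then show False using s4 h(8) h(2-4) by linarith
  next
    case False
    then have s1: "a1 + b1 = 2*t+3" using c1 by auto
    have "a4 < a1 + 4" using s1 s4 h(8) by linarith
    moreover have "a1 + 2 \<le> a3" using False o3 h(2,3) by presburger
    ultimately have "a2 = a1 + 1" using h(2-4) by linarith
    then have "even a2" using False by simp
    then have "a2 + b2 = 2*t+7" using c2 by auto
    then show False using s1 \<open>a2 = a1 + 1\<close> h(6) by linarith
  qed
qed

lemma Mt_block: assumes "1 \<le> s" "s \<le> t" shows "chainP (set_one (Mt t) (2*s) 1)"
  apply (rule chainP_I[of "2*s-1" "2*s" "2*s+1" "2*s+2" _ 1 "2*t+4-2*s" "2*t+2-2*s" "2*t+5-2*s"])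
  using assms by (auto simp: set_one_def nrows_def ncols_def ent_def Mt_def)



lemma set_one_simps: "nrows (set_one M i j) = nrows M" "ncols (set_one M i j) = ncols M"
  "ent (set_one M i j) a b \<longleftrightarrow> ent M a b \<or> (a = i \<and> b = j)"
  by (auto simp: set_one_def nrows_def ncols_def ent_def)

lemma chainP_mono: "chainP M \<Longrightarrow> nrows N = nrows M \<Longrightarrow> ncols N = ncols M \<Longrightarrow> (\<forall>a b. ent M a b \<longrightarrow> ent N a b) \<Longrightarrow> chainP N"
proof -
  assume "chainP M" and d: "nrows N = nrows M" "ncols N = ncols M" and e: "\<forall>a b. ent M a b \<longrightarrow> ent N a b"
  then obtain a1 b1 a2 b2 a3 b3 a4 b4 where h: "1 \<le> a1" "a1 < a2" "a2 < a3" "a3 < a4" "a4 \<le> nrows M"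
     "1 \<le> b2" "b2 < b1" "b2 < b3" "b1 < b4" "b3 < b4" "b4 \<le> ncols M"
     "ent M a1 b1" "ent M a2 b2" "ent M a3 b3" "ent M a4 b4"
    unfolding chainP_def by blast
  show "chainP N" apply (rule chainP_I[of a1 a2 a3 a4 N b2 b1 b3 b4]) using h d e by auto
qed

definition cnt :: "bmat \<Rightarrow> nat" where
  "cnt M = card {(a,b). a \<in> {1..nrows M} \<and> b \<in> {1..ncols M} \<and> ent M a b}"

lemma cnt_le: "cnt M \<le> nrows M * ncols M"
proof -
  have "{(a,b). a \<in> {1..nrows M} \<and> b \<in> {1..ncols M} \<and> ent M a b} \<subseteq> {1..nrows M} \<times> {1..ncols M}" by auto
  then have "cnt M \<le> card ({1..nrows M} \<times> {1..ncols M})" unfolding cnt_def by (intro card_mono) auto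
  then show ?thesis by (simp add: card_cartesian_product)
qed

lemma cnt_set_one: assumes "i \<in> {1..nrows M}" "j \<in> {1..ncols M}" "\<not> ent M i j"
  shows "cnt (set_one M i j) = Suc (cnt M)"
proof -
  have "{(a,b). a \<in> {1..nrows (set_one M i j)} \<and> b \<in> {1..ncols (set_one M i j)} \<and> ent (set_one M i j) a b}
      = insert (i,j) {(a,b). a \<in> {1..nrows M} \<and> b \<in> {1..ncols M} \<and> ent M a b}"
    using assms by (auto simp: set_one_simps)
  moreover have "finite {(a,b). a \<in> {1..nrows M} \<and> b \<in> {1..ncols M} \<and> ent M a b}"
    by (rule finite_subset[of _ "{1..nrows M} \<times> {1..ncols M}"]) auto
  ultimately show ?thesis unfolding cnt_def using assms by simp
qed

lemma crit_ext:
  assumes "M \<in> Av F"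
  shows "\<exists>N. critical (Av F) N \<and> nrows N = nrows M \<and> ncols N = ncols M \<and> (\<forall>a b. ent M a b \<longrightarrow> ent N a b)"
proof -
  define S where "S = {N. N \<in> Av F \<and> nrows N = nrows M \<and> ncols N = ncols M \<and> (\<forall>a b. ent M a b \<longrightarrow> ent N a b)}"
  have "M \<in> S" using assms unfolding S_def by blast
  moreover have "\<forall>y. y \<in> S \<longrightarrow> cnt y < Suc (nrows M * ncols M)"
    using cnt_le unfolding S_def by (metis (mono_tags, lifting) le_imp_less_Suc mem_Collect_eq)
  ultimately have "\<exists>x. x \<in> S \<and> (\<forall>y. y \<in> S \<longrightarrow> cnt y \<le> cnt x)"
    by (rule ex_has_greatest_nat[of "\<lambda>N. N \<in> S" M cnt "Suc (nrows M * ncols M)"])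
  then obtain N where N: "N \<in> S" "\<forall>y. y \<in> S \<longrightarrow> cnt y \<le> cnt N" by blast
  have "critical (Av F) N"
    unfolding critical_def
  proof (intro conjI ballI impI)
    show "N \<in> Av F" using N(1) unfolding S_def by blast
    fix i j assume ij: "i \<in> {1..nrows N}" "j \<in> {1..ncols N}" "\<not> ent N i j"
    show "set_one N i j \<notin> Av F"
    proof
      assume "set_one N i j \<in> Av F"
      then have "set_one N i j \<in> S" using N(1) unfolding S_def by (auto simp: set_one_simps)
      then have "cnt (set_one N i j) \<le> cnt N" using N(2) by blast
      then show False using cnt_set_one[OF ij] by simp
    qed
  qed
  then show ?thesis using N(1) unfolding S_def by blast
qed

lemma col_runs_finite: "finite (col_zero_runs M j)"
proof -
  have "col_zero_runs M j \<subseteq> (\<lambda>(a,b). {a..b}) ` ({0..nrows M} \<times> {0..nrows M})"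
  proof
    fix R assume "R \<in> col_zero_runs M j"
    then obtain a b where "R = {a..b}" "a \<le> nrows M" "b \<le> nrows M" unfolding col_zero_runs_def by auto
    then show "R \<in> (\<lambda>(a,b). {a..b}) ` ({0..nrows M} \<times> {0..nrows M})"
      by (intro image_eqI[of _ _ "(a,b)"]) auto
  qed
  then show ?thesis by (rule finite_subset) auto
qed

lemma not_col_bounded: "\<not> col_bounded (Av {D4, Ppat})"
proof
  assume "col_bounded (Av {D4, Ppat})"
  then obtain B where HB: "\<forall>M. critical (Av {D4, Ppat}) M \<longrightarrow> (\<forall>j \<in> {1..ncols M}. col_complexity M j \<le> B)"
    unfolding col_bounded_def by blast
  define t where "t = Suc B"
  have "Mt t \<in> Av {D4, Ppat}" using Av_iff Mt_noD Mt_noP by blast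
  from crit_ext[OF this] obtain N where N0: "critical (Av {D4, Ppat}) N" "nrows N = nrows (Mt t)" "ncols N = ncols (Mt t)"
     "\<forall>a b. ent (Mt t) a b \<longrightarrow> ent N a b" by blast
  have N: "critical (Av {D4, Ppat}) N" "nrows N = 2*t+2" "ncols N = 2*t+3"
     "\<forall>a b. ent (Mt t) a b \<longrightarrow> ent N a b" using N0 by (simp_all add: Mt_simps)
  have NAv: "N \<in> Av {D4, Ppat}" using N(1) critical_def by blast
  have z: "\<not> ent N (2*s) 1" if "1 \<le> s" "s \<le> t" for s
  proof
    assume e: "ent N (2*s) 1"
    have "\<forall>a b. ent (set_one (Mt t) (2*s) 1) a b \<longrightarrow> ent N a b"
      using N(4) e by (simp add: set_one_simps)
    moreover have "nrows N = nrows (set_one (Mt t) (2*s) 1)" "ncols N = ncols (set_one (Mt t) (2*s) 1)"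
      using N(2,3) by (simp_all add: set_one_simps Mt_simps)
    ultimately have "chainP N"
      using chainP_mono[OF Mt_block[OF that]] by blast
    then show False using NAv Av_iff by blast
  qed
  have o: "ent N (2*s+1) 1" if "s \<le> t" for s
  proof -
    have "ent (Mt t) (2*s+1) 1" using that by (simp add: Mt_simps)
    then show ?thesis using N(4) by blast
  qed
  have sub: "(\<lambda>s. {2*s..2*s}) ` {1..t} \<subseteq> col_zero_runs N 1"
  proof
    fix R assume "R \<in> (\<lambda>s. {2*s..2*s}) ` {1..t}"
    then obtain s where s: "1 \<le> s" "s \<le> t" "R = {2*s..2*s}" by auto
    have eq: "2*(s-1)+1 = 2*s - 1" using s(1) by simp
    have o1: "ent N (2*s - 1) 1" using o[of "s - 1"] s(2) unfolding eq by simp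
    show "R \<in> col_zero_runs N 1" unfolding col_zero_runs_def
      apply (rule CollectI, rule exI[of _ "2*s"], rule exI[of _ "2*s"])
      using s z[OF s(1,2)] o1 o[OF s(2)] N(2) by simp
  qed
  have "inj_on (\<lambda>s. {2*s..2*s}) {1..t}" by (auto simp: inj_on_def)
  then have "card ((\<lambda>s. {2*s..2*s}) ` {1..t}) = t" by (simp add: card_image)
  then have "t \<le> col_complexity N 1" unfolding col_complexity_def
    using card_mono[OF col_runs_finite sub] by simp
  moreover have "col_complexity N 1 \<le> B"
  proof -
    have "1 \<in> {1..ncols N}" using N(3) by simp
    then show ?thesis using HB N(1) by blast
  qed
  ultimately show False unfolding t_def by simp
qed



definition Below :: "bmat \<Rightarrow> nat \<Rightarrow> nat \<Rightarrow> bool" where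
  "Below M i x \<longleftrightarrow> (\<exists>a b. ent M a b \<and> i < a \<and> a \<le> nrows M \<and> x < b \<and> b \<le> ncols M)"
definition Below2 :: "bmat \<Rightarrow> nat \<Rightarrow> nat \<Rightarrow> bool" where
  "Below2 M i x \<longleftrightarrow> (\<exists>a3 b3 a4 b4. ent M a3 b3 \<and> ent M a4 b4 \<and> i < a3 \<and> a3 < a4 \<and> a4 \<le> nrows M \<and> x < b3 \<and> b3 < b4 \<and> b4 \<le> ncols M)"
definition Abv :: "bmat \<Rightarrow> nat \<Rightarrow> nat \<Rightarrow> bool" where
  "Abv M i x \<longleftrightarrow> (\<exists>a b. ent M a b \<and> 1 \<le> a \<and> a < i \<and> 1 \<le> b \<and> b < x)"
definition Abv2 :: "bmat \<Rightarrow> nat \<Rightarrow> nat \<Rightarrow> bool" where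
  "Abv2 M i x \<longleftrightarrow> (\<exists>a1 b1 a2 b2. ent M a1 b1 \<and> ent M a2 b2 \<and> 1 \<le> a1 \<and> a1 < a2 \<and> a2 < i \<and> 1 \<le> b1 \<and> b1 < b2 \<and> b2 < x)"
definition P1 :: "bmat \<Rightarrow> nat \<Rightarrow> nat \<Rightarrow> bool" where
  "P1 M i u \<longleftrightarrow> (\<exists>a2 b2 a3 b3 a4 b4. ent M a2 b2 \<and> ent M a3 b3 \<and> ent M a4 b4 \<and> i < a2 \<and> a2 < a3 \<and> a3 < a4 \<and> a4 \<le> nrows M \<and>
     u \<le> b2 \<and> b2 < b3 \<and> b3 < b4 \<and> b4 \<le> ncols M)"
definition P3 :: "bmat \<Rightarrow> nat \<Rightarrow> nat \<Rightarrow> nat \<Rightarrow> bool" where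
  "P3 M i x u \<longleftrightarrow> (\<exists>a1 b1 a2 b2. ent M a1 b1 \<and> ent M a2 b2 \<and> 1 \<le> a1 \<and> a1 < a2 \<and> a2 < i \<and> 1 \<le> b2 \<and> b2 < b1 \<and> b2 < x \<and> b1 < u)"

lemma BelowI: "ent M a b \<Longrightarrow> i < a \<Longrightarrow> a \<le> nrows M \<Longrightarrow> x < b \<Longrightarrow> b \<le> ncols M \<Longrightarrow> Below M i x"
  unfolding Below_def by blast
lemma Below2I: "ent M a3 b3 \<Longrightarrow> ent M a4 b4 \<Longrightarrow> i < a3 \<Longrightarrow> a3 < a4 \<Longrightarrow> a4 \<le> nrows M \<Longrightarrow> x < b3 \<Longrightarrow> b3 < b4 \<Longrightarrow> b4 \<le> ncols M \<Longrightarrow> Below2 M i x"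
  unfolding Below2_def by blast
lemma AbvI: "ent M a b \<Longrightarrow> 1 \<le> a \<Longrightarrow> a < i \<Longrightarrow> 1 \<le> b \<Longrightarrow> b < x \<Longrightarrow> Abv M i x"
  unfolding Abv_def by blast
lemma Abv2I: "ent M a1 b1 \<Longrightarrow> ent M a2 b2 \<Longrightarrow> 1 \<le> a1 \<Longrightarrow> a1 < a2 \<Longrightarrow> a2 < i \<Longrightarrow> 1 \<le> b1 \<Longrightarrow> b1 < b2 \<Longrightarrow> b2 < x \<Longrightarrow> Abv2 M i x"
  unfolding Abv2_def by blast
lemma P1I: "ent M a2 b2 \<Longrightarrow> ent M a3 b3 \<Longrightarrow> ent M a4 b4 \<Longrightarrow> i < a2 \<Longrightarrow> a2 < a3 \<Longrightarrow> a3 < a4 \<Longrightarrow> a4 \<le> nrows M \<Longrightarrow>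
     u \<le> b2 \<Longrightarrow> b2 < b3 \<Longrightarrow> b3 < b4 \<Longrightarrow> b4 \<le> ncols M \<Longrightarrow> P1 M i u"
  unfolding P1_def by blast
lemma P3I: "ent M a1 b1 \<Longrightarrow> ent M a2 b2 \<Longrightarrow> 1 \<le> a1 \<Longrightarrow> a1 < a2 \<Longrightarrow> a2 < i \<Longrightarrow> 1 \<le> b2 \<Longrightarrow> b2 < b1 \<Longrightarrow> b2 < x \<Longrightarrow> b1 < u \<Longrightarrow> P3 M i x u"
  unfolding P3_def by blast

lemma WD:
  assumes nD: "\<not> chainD M" and i: "1 \<le> i" "i \<le> nrows M"
    and u: "1 \<le> uL" "uL < x" "x < uR" "uR \<le> ncols M" "ent M i uL" "ent M i uR"
    and c: "chainD (set_one M i x)"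
  shows "(Abv M i x \<and> Below2 M i x) \<or> (Abv2 M i x \<and> Below M i x)"
proof -
  obtain a1 b1 a2 b2 a3 b3 a4 b4 where h: "1 \<le> a1" "a1 < a2" "a2 < a3" "a3 < a4" "a4 \<le> nrows M"
     "1 \<le> b1" "b1 < b2" "b2 < b3" "b3 < b4" "b4 \<le> ncols M"
     and e: "ent M a1 b1 \<or> (a1 = i \<and> b1 = x)" "ent M a2 b2 \<or> (a2 = i \<and> b2 = x)"
     "ent M a3 b3 \<or> (a3 = i \<and> b3 = x)" "ent M a4 b4 \<or> (a4 = i \<and> b4 = x)"
    using c unfolding chainD_def set_one_simps by blast
  show ?thesis
  proof (cases "a1 = i \<and> b1 = x")
    case True
    then have "ent M a2 b2" "ent M a3 b3" "ent M a4 b4" "b1 = x" using e h by auto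
    then have "chainD M" using h u i True by (intro chainD_I[of i a2 a3 a4 M uL b2 b3 b4]) auto
    then show ?thesis using nD by blast
  next
    case F1: False
    then have m1: "ent M a1 b1" using e by blast
    show ?thesis
    proof (cases "a2 = i \<and> b2 = x")
      case True
      then have "ent M a3 b3" "ent M a4 b4" "b2 = x" using e h by auto
      then have "Abv M i x" "Below2 M i x" using h m1 True
        by (intro AbvI[of M a1 b1] Below2I[of M a3 b3 a4 b4], auto)+
      then show ?thesis by blast
    next
      case F2: False
      then have m2: "ent M a2 b2" using e by blast
      show ?thesis
      proof (cases "a3 = i \<and> b3 = x")
        case True
        then have "ent M a4 b4" "b3 = x" using e h by auto
        then have "Abv2 M i x" "Below M i x" using h m1 m2 True
          by (intro Abv2I[of M a1 b1 a2 b2] BelowI[of M a4 b4], auto)+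
        then show ?thesis by blast
      next
        case F3: False
        then have m3: "ent M a3 b3" using e by blast
        show ?thesis
        proof (cases "a4 = i \<and> b4 = x")
          case True
          then have "b4 = x" using e by auto
          then have "chainD M" using h u i True m1 m2 m3 by (intro chainD_I[of a1 a2 a3 i M b1 b2 b3 uR]) auto
          then show ?thesis using nD by blast
        next
          case False
          then have "ent M a4 b4" using e by blast
          then have "chainD M" using h m1 m2 m3 by (intro chainD_I[of a1 a2 a3 a4 M b1 b2 b3 b4]) auto
          then show ?thesis using nD by blast
        qed
      qed
    qed
  qed
qed

lemma WP:
  assumes nD: "\<not> chainP M" and i: "1 \<le> i" "i \<le> nrows M"
    and u: "1 \<le> uL" "uL < x" "x < uR" "uR \<le> ncols M" "ent M i uL" "ent M i uR"
    and c: "chainP (set_one M i x)"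
  shows "(P1 M i uL \<and> Below M i x) \<or> (P3 M i x uR \<and> Below M i x)"
proof -
  obtain a1 b1 a2 b2 a3 b3 a4 b4 where h: "1 \<le> a1" "a1 < a2" "a2 < a3" "a3 < a4" "a4 \<le> nrows M"
     "1 \<le> b2" "b2 < b1" "b2 < b3" "b1 < b4" "b3 < b4" "b4 \<le> ncols M"
     and e: "ent M a1 b1 \<or> (a1 = i \<and> b1 = x)" "ent M a2 b2 \<or> (a2 = i \<and> b2 = x)"
     "ent M a3 b3 \<or> (a3 = i \<and> b3 = x)" "ent M a4 b4 \<or> (a4 = i \<and> b4 = x)"
    using c unfolding chainP_def set_one_simps by blast
  show ?thesis
  proof (cases "a1 = i \<and> b1 = x")
    case T1: True
    then have m: "ent M a2 b2" "ent M a3 b3" "ent M a4 b4" and b1: "b1 = x" using e h by auto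
    show ?thesis
    proof (cases "uL \<le> b2")
      case True
      then have "P1 M i uL" "Below M i x" using h m b1 T1
        by (intro P1I[of M a2 b2 a3 b3 a4 b4] BelowI[of M a4 b4], auto)+
      then show ?thesis by blast
    next
      case False
      then have "chainP M" using h u i m b1 T1 by (intro chainP_I[of i a2 a3 a4 M b2 uL b3 b4]) auto
      then show ?thesis using nD by blast
    qed
  next
    case F1: False
    then have m1: "ent M a1 b1" using e by blast
    show ?thesis
    proof (cases "a2 = i \<and> b2 = x")
      case True
      then have "ent M a3 b3" "ent M a4 b4" "b2 = x" using e h by auto
      then have "chainP M" using h u i True m1 by (intro chainP_I[of a1 i a3 a4 M uL b1 b3 b4]) auto
      then show ?thesis using nD by blast
    next
      case F2: False
      then have m2: "ent M a2 b2" using e by blast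
      show ?thesis
      proof (cases "a3 = i \<and> b3 = x")
        case T3: True
        then have m4: "ent M a4 b4" and b3: "b3 = x" using e h by auto
        show ?thesis
        proof (cases "b4 \<le> uR")
          case True
          then have "P3 M i x uR" "Below M i x" using h m1 m2 m4 b3 T3
            by (intro P3I[of M a1 b1 a2 b2] BelowI[of M a4 b4], auto)+
          then show ?thesis by blast
        next
          case False
          then have "chainP M" using h u i m1 m2 m4 b3 T3 by (intro chainP_I[of a1 a2 i a4 M b2 b1 uR b4]) auto
          then show ?thesis using nD by blast
        qed
      next
        case F3: False
        then have m3: "ent M a3 b3" using e by blast
        show ?thesis
        proof (cases "a4 = i \<and> b4 = x")
          case True
          then have "b4 = x" using e by auto
          then have "chainP M" using h u i True m1 m2 m3 by (intro chainP_I[of a1 a2 a3 i M b2 b1 b3 uR]) auto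
          then show ?thesis using nD by blast
        next
          case False
          then have "ent M a4 b4" using e by blast
          then have "chainP M" using h m1 m2 m3 by (intro chainP_I[of a1 a2 a3 a4 M b2 b1 b3 b4]) auto
          then show ?thesis using nD by blast
        qed
      qed
    qed
  qed
qed



lemma C1: "P1 M i uL \<Longrightarrow> ent M i u \<Longrightarrow> 1 \<le> u \<Longrightarrow> u < uL \<Longrightarrow> 1 \<le> i \<Longrightarrow> chainD M"
proof -
  assume "P1 M i uL" "ent M i u" "1 \<le> u" "u < uL" "1 \<le> i"
  then obtain a2 b2 a3 b3 a4 b4 where h: "ent M a2 b2" "ent M a3 b3" "ent M a4 b4" "i < a2" "a2 < a3" "a3 < a4" "a4 \<le> nrows M"
     "uL \<le> b2" "b2 < b3" "b3 < b4" "b4 \<le> ncols M" unfolding P1_def by blast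
  show "chainD M" using h \<open>ent M i u\<close> \<open>1 \<le> u\<close> \<open>u < uL\<close> \<open>1 \<le> i\<close>
    by (intro chainD_I[of i a2 a3 a4 M u b2 b3 b4]) auto
qed

lemma C2: "P3 M i x u \<Longrightarrow> ent M i u \<Longrightarrow> x < u \<Longrightarrow> u < x' \<Longrightarrow> Below M i x' \<Longrightarrow> chainP M"
proof -
  assume "P3 M i x u" "ent M i u" "x < u" "u < x'" "Below M i x'"
  then obtain a1 b1 a2 b2 a b where h: "ent M a1 b1" "ent M a2 b2" "1 \<le> a1" "a1 < a2" "a2 < i" "1 \<le> b2" "b2 < b1" "b2 < x" "b1 < u"
    "ent M a b" "i < a" "a \<le> nrows M" "x' < b" "b \<le> ncols M"
    unfolding P3_def Below_def by blast
  show "chainP M" using h \<open>ent M i u\<close> \<open>x < u\<close> \<open>u < x'\<close> by (intro chainP_I[of a1 a2 i a M b2 b1 u b]) auto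
qed

lemma C3: "Abv2 M i x \<Longrightarrow> ent M i u \<Longrightarrow> x < u \<Longrightarrow> u < x' \<Longrightarrow> Below M i x' \<Longrightarrow> chainD M"
proof -
  assume "Abv2 M i x" "ent M i u" "x < u" "u < x'" "Below M i x'"
  then obtain a1 b1 a2 b2 a b where h: "ent M a1 b1" "ent M a2 b2" "1 \<le> a1" "a1 < a2" "a2 < i" "1 \<le> b1" "b1 < b2" "b2 < x"
    "ent M a b" "i < a" "a \<le> nrows M" "x' < b" "b \<le> ncols M"
    unfolding Abv2_def Below_def by blast
  show "chainD M" using h \<open>ent M i u\<close> \<open>x < u\<close> \<open>u < x'\<close> by (intro chainD_I[of a1 a2 i a M b1 b2 u b]) auto
qed

lemma C4: "Abv M i x \<Longrightarrow> ent M i u \<Longrightarrow> x < u \<Longrightarrow> u < x' \<Longrightarrow> Below2 M i x' \<Longrightarrow> chainD M"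
proof -
  assume "Abv M i x" "ent M i u" "x < u" "u < x'" "Below2 M i x'"
  then obtain a1 b1 a3 b3 a4 b4 where h: "ent M a1 b1" "1 \<le> a1" "a1 < i" "1 \<le> b1" "b1 < x"
    "ent M a3 b3" "ent M a4 b4" "i < a3" "a3 < a4" "a4 \<le> nrows M" "x' < b3" "b3 < b4" "b4 \<le> ncols M"
    unfolding Abv_def Below2_def by blast
  show "chainD M" using h \<open>ent M i u\<close> \<open>x < u\<close> \<open>u < x'\<close> by (intro chainD_I[of a1 i a3 a4 M b1 u b3 b4]) auto
qed

lemma Wit:
  assumes crit: "critical (Av {D4, Ppat}) M" and i: "1 \<le> i" "i \<le> nrows M"
    and u: "1 \<le> uL" "uL < x" "x < uR" "uR \<le> ncols M" "ent M i uL" "ent M i uR" "\<not> ent M i x"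
  shows "Below M i x \<and> ((Abv M i x \<and> Below2 M i x) \<or> (Abv2 M i x \<and> Below M i x) \<or> P1 M i uL \<or> P3 M i x uR)"
proof -
  have MAv: "M \<in> Av {D4, Ppat}" using crit critical_def by blast
  then have nD: "\<not> chainD M" and nP: "\<not> chainP M" using Av_iff by auto
  have "set_one M i x \<notin> Av {D4, Ppat}" using crit i u unfolding critical_def by auto
  then have "chainD (set_one M i x) \<or> chainP (set_one M i x)" using Av_iff by blast
  moreover have "Below2 M i x \<Longrightarrow> Below M i x" unfolding Below2_def Below_def by (meson order.strict_trans)
  ultimately show ?thesis using WD[OF nD i u(1-6)] WP[OF nP i u(1-6)] by blast
qed

lemma row_main:
  assumes crit: "critical (Av {D4, Ppat}) M" and i: "1 \<le> i" "i \<le> nrows M"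
    and o: "1 \<le> u0" "u0 < u1" "u1 < x2" "x2 < u2" "u2 < x3" "x3 < u3" "u3 < x4" "x4 < u4" "u4 \<le> ncols M"
    and e: "ent M i u0" "ent M i u1" "ent M i u2" "ent M i u3" "ent M i u4"
    and z: "\<not> ent M i x2" "\<not> ent M i x3" "\<not> ent M i x4"
  shows False
proof -
  have MAv: "M \<in> Av {D4, Ppat}" using crit critical_def by blast
  then have nD: "\<not> chainD M" and nP: "\<not> chainP M" using Av_iff by auto
  have W2: "Below M i x2 \<and> ((Abv M i x2 \<and> Below2 M i x2) \<or> (Abv2 M i x2 \<and> Below M i x2) \<or> P1 M i u1 \<or> P3 M i x2 u2)"
    by (rule Wit[OF crit i]) (use o e z in auto)
  have W3: "Below M i x3 \<and> ((Abv M i x3 \<and> Below2 M i x3) \<or> (Abv2 M i x3 \<and> Below M i x3) \<or> P1 M i u2 \<or> P3 M i x3 u3)"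
    by (rule Wit[OF crit i]) (use o e z in auto)
  have W4: "Below M i x4 \<and> ((Abv M i x4 \<and> Below2 M i x4) \<or> (Abv2 M i x4 \<and> Below M i x4) \<or> P1 M i u3 \<or> P3 M i x4 u4)"
    by (rule Wit[OF crit i]) (use o e z in auto)
  have A2: "Abv M i x2"
  proof -
    have "\<not> P1 M i u1" using C1[of M i u1 u0] e o i nD by auto
    moreover have "\<not> P3 M i x2 u2" using C2[of M i x2 u2 x3] e o W3 nP by auto
    moreover have "\<not> Abv2 M i x2" using C3[of M i x2 u2 x3] e o W3 nD by auto
    ultimately show ?thesis using W2 by blast
  qed
  have B3: "Below2 M i x3"
  proof -
    have "\<not> P1 M i u2" using C1[of M i u2 u1] e o i nD by auto
    moreover have "\<not> P3 M i x3 u3" using C2[of M i x3 u3 x4] e o W4 nP by auto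
    moreover have "\<not> Abv2 M i x3" using C3[of M i x3 u3 x4] e o W4 nD by auto
    ultimately show ?thesis using W3 by blast
  qed
  show False using C4[OF A2 e(3) o(4) o(5) B3] nD by blast
qed



definition Zs :: "bmat \<Rightarrow> nat \<Rightarrow> nat set" where
  "Zs M i = {a \<in> {1..ncols M}. \<not> ent M i a \<and> (a = 1 \<or> ent M i (a - 1))}"

lemma Min_ival: "(a::nat) \<le> b \<Longrightarrow> Min {a..b} = a"
  by (rule Min_eqI) auto

lemma Min_run: "R \<in> row_zero_runs M i \<Longrightarrow> Min R \<in> Zs M i"
proof -
  assume "R \<in> row_zero_runs M i"
  then obtain a b where ab: "R = {a..b}" "1 \<le> a" "a \<le> b" "b \<le> ncols M" "\<forall>j\<in>{a..b}. \<not> ent M i j"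
    "a = 1 \<or> ent M i (a - 1)" unfolding row_zero_runs_def by blast
  then have "Min R = a" using Min_ival by simp
  then show ?thesis using ab unfolding Zs_def by auto
qed

lemma inj_Min_runs: "inj_on Min (row_zero_runs M i)"
proof (rule inj_onI)
  fix R R' assume R: "R \<in> row_zero_runs M i" and R': "R' \<in> row_zero_runs M i" and m: "Min R = Min R'"
  obtain a b where ab: "R = {a..b}" "1 \<le> a" "a \<le> b" "b \<le> ncols M" "\<forall>j\<in>{a..b}. \<not> ent M i j"
    "b = ncols M \<or> ent M i (b + 1)" using R unfolding row_zero_runs_def by blast
  obtain a' b' where ab': "R' = {a'..b'}" "1 \<le> a'" "a' \<le> b'" "b' \<le> ncols M" "\<forall>j\<in>{a'..b'}. \<not> ent M i j"
    "b' = ncols M \<or> ent M i (b' + 1)" using R' unfolding row_zero_runs_def by blast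
  have "a = a'" using m ab ab' Min_ival by simp
  have "\<not> b < b'"
  proof
    assume "b < b'"
    then have "b + 1 \<in> {a'..b'}" using ab(3) \<open>a = a'\<close> by auto
    then show False using ab(6) ab'(4,5) \<open>b < b'\<close> by auto
  qed
  moreover have "\<not> b' < b"
  proof
    assume "b' < b"
    then have "b' + 1 \<in> {a..b}" using ab'(3) \<open>a = a'\<close> by auto
    then show False using ab'(6) ab(4,5) \<open>b' < b\<close> by auto
  qed
  ultimately show "R = R'" using ab(1) ab'(1) \<open>a = a'\<close> by simp
qed

lemma runs_le: "row_complexity M i \<le> card (Zs M i)"
  unfolding row_complexity_def
proof (rule card_inj_on_le[OF inj_Min_runs])
  show "Min ` row_zero_runs M i \<subseteq> Zs M i" using Min_run by blast
  show "finite (Zs M i)" unfolding Zs_def by auto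
qed

lemma row_bound5:
  assumes crit: "critical (Av {D4, Ppat}) M" and i: "i \<in> {1..nrows M}"
  shows "row_complexity M i \<le> 5"
proof (rule ccontr)
  assume "\<not> row_complexity M i \<le> 5"
  then have c6: "6 \<le> card (Zs M i)" using runs_le[of M i] by linarith
  define L where "L = sorted_list_of_set (Zs M i)"
  have fin: "finite (Zs M i)" unfolding Zs_def by auto
  have len: "6 \<le> length L" using c6 fin unfolding L_def by simp
  have sw: "sorted_wrt (<) L" unfolding L_def by (rule strict_sorted_list_of_set)
  have inZ: "L ! k \<in> Zs M i" if "k < 6" for k
  proof -
    have "L ! k \<in> set L" using that len by simp
    then show ?thesis using fin unfolding L_def by simp
  qed
  have lt: "L ! j < L ! k" if "j < k" "k < 6" for j k
    using sorted_wrt_nth_less[OF sw that(1)] that len by simp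
  have zl: "1 \<le> L ! k" "L ! k \<le> ncols M" "\<not> ent M i (L ! k)" if "k < 6" for k
    using inZ[OF that] unfolding Zs_def by auto
  have ze: "ent M i (L ! k - 1)" "2 \<le> L ! k" if "0 < k" "k < 6" for k
  proof -
    have "L ! 0 < L ! k" using lt[of 0 k] that by simp
    moreover have "1 \<le> L ! 0" using zl(1)[of 0] by simp
    ultimately show "2 \<le> L ! k" by simp
    then show "ent M i (L ! k - 1)" using inZ[OF that(2)] unfolding Zs_def by auto
  qed
  have sep: "L ! j < L ! k - 1" if "0 < j" "j < k" "k < 6" for j k
  proof -
    have "L ! j \<le> L ! k - 1" using lt[OF that(2,3)] by simp
    moreover have "L ! j \<noteq> L ! k - 1" using zl(3)[of j] ze(1)[of k] that by auto
    ultimately show ?thesis by simp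
  qed
  have ii: "1 \<le> i" "i \<le> nrows M" using i by auto
  show False
    apply (rule row_main[OF crit ii, of "L!1 - 1" "L!2 - 1" "L!2" "L!3 - 1" "L!3" "L!4 - 1" "L!4" "L!5 - 1"])
    using ze[of 1] ze[of 2] ze[of 3] ze[of 4] ze[of 5] zl[of 5] zl[of 2] zl[of 3] zl[of 4]
      sep[of 2 3] sep[of 3 4] sep[of 4 5] lt[of 1 2]
    by auto
qed

theorem proposition4p1:
  shows "row_bounded (Av {D4, Ppat}) \<and> \<not> col_bounded (Av {D4, Ppat})"
proof
  show "row_bounded (Av {D4, Ppat})" unfolding row_bounded_def using row_bound5 by blast
  show "\<not> col_bounded (Av {D4, Ppat})" by (rule not_col_bounded)
qed

end
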